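(* If $\alpha$ is a non-zero rational number other than $\pm1$, then $M_\infty(\alpha)$ equals the largest prime dividing the numerator or the denominator of $\alpha$ (written in lowest terms).
   Context: For a non-zero algebraic number $\gamma$ with minimal polynomial $A\prod_{n=1}^N(x-\gamma_n)$ over $\mathbb Z$ (primitive, $A>0$), $M(\gamma)=A\prod_{n=1}^N\max\{1,|\gamma_n|\}$. The ultrametric Mahler measure is $M_\infty(\alpha)=\inf\{\max_{1\le n\le N}M(\alpha_n): N\in\mathbb N,\ \alpha_n\in\overline{\mathbb Q}^\times,\ \alpha=\alpha_1\cdots\alpha_N\}$. *)

theory Defs
  imports "HOL-Computational_Algebra.Computational_Algebra"
begin

definition min_int_poly :: "complex \<Rightarrow> int poly" where
  "min_int_poly g = (THE p. irreducible p \<and> lead_coeff p > 0 \<and>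
      poly (map_poly of_int p) g = 0)"

definition mahler_poly :: "int poly \<Rightarrow> real" where
  "mahler_poly p = real_of_int \<bar>lead_coeff p\<bar> *
     (\<Prod>z\<in>{z. poly (map_poly of_int p) z = 0}.
        max 1 (cmod z) ^ order z (map_poly of_int p :: complex poly))"

definition mahler :: "complex \<Rightarrow> real" where
  "mahler g = mahler_poly (min_int_poly g)"

definition mahler_ultra :: "complex \<Rightarrow> real" where
  "mahler_ultra a = Inf {Max (mahler ` set xs) | xs. xs \<noteq> [] \<and>
      (\<forall>x\<in>set xs. algebraic x \<and> x \<noteq> 0) \<and> prod_list xs = a}"

end

theory Submission
  imports Defs "Jordan_Normal_Form.Char_Poly"
begin

definition ev_int :: "complex \<Rightarrow> bool" where
  "ev_int l \<longleftrightarrow> (\<exists>m (A::nat\<Rightarrow>nat\<Rightarrow>int) (w::nat\<Rightarrow>complex). (\<exists>i<m. w i \<noteq> 0) \<and>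
      (\<forall>i<m. l * w i = (\<Sum>t<m. of_int (A i t) * w t)))"

lemma ev_int_imp_algebraic_int:
  assumes "ev_int l" shows "algebraic_int l"
proof -
  obtain m :: nat and A w where ex: "\<exists>i<m. w i \<noteq> 0" and eq: "\<forall>i<m. l * w i = (\<Sum>t<m. of_int (A i t) * w t)"
    using assms unfolding ev_int_def by auto
  obtain i0 where i0: "i0 < m" "w i0 \<noteq> 0" using ex by blast
  define M :: "int mat" where "M = mat m m (\<lambda>(i,t). A i t)"
  define v :: "complex vec" where "v = vec m w"
  have M: "M \<in> carrier_mat m m" unfolding M_def by simp
  have M': "(map_mat of_int M :: complex mat) \<in> carrier_mat m m" using M by simp
  have "map_mat of_int M *\<^sub>v v = l \<cdot>\<^sub>v v"
  proof (rule eq_vecI)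
    fix i assume "i < dim_vec (l \<cdot>\<^sub>v v)"
    hence i: "i < m" by (simp add: v_def)
    have "(map_mat of_int M *\<^sub>v v) $ i = (\<Sum>t<m. of_int (A i t) * w t)"
      using i by (simp add: M_def v_def mult_mat_vec_def scalar_prod_def lessThan_atLeast0)
    also have "\<dots> = l * w i" using eq i by simp
    finally show "(map_mat of_int M *\<^sub>v v) $ i = (l \<cdot>\<^sub>v v) $ i" using i by (simp add: v_def)
  qed (simp add: M_def v_def)
  moreover have "v \<noteq> 0\<^sub>v m"
  proof
    assume "v = 0\<^sub>v m"
    hence "v $ i0 = 0" using i0 by simp
    thus False using i0 by (simp add: v_def)
  qed
  moreover have "v \<in> carrier_vec m" by (simp add: v_def)
  ultimately have "eigenvector (map_mat of_int M) v l"
    unfolding eigenvector_def using M' by simp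
  hence "eigenvalue (map_mat of_int M) l" unfolding eigenvalue_def by blast
  hence "poly (char_poly (map_mat of_int M)) l = 0"
    using eigenvalue_root_char_poly[OF M'] by simp
  hence "poly (of_int_poly (char_poly M)) l = 0"
    by (metis \<open>poly (char_poly (map_mat of_int M)) l = 0\<close> of_int_hom.char_poly_hom[OF M])
  moreover have "monic (char_poly M)" using degree_monic_char_poly[OF M] by simp
  ultimately show ?thesis unfolding algebraic_int_altdef_ipoly by blast
qed

lemma sum_div_mod:
  fixes f :: "nat \<Rightarrow> nat \<Rightarrow> 'a::comm_monoid_add"
  shows "(\<Sum>k<m*n. f (k div n) (k mod n)) = (\<Sum>t<m. \<Sum>s<n. f t s)"
proof (induction m)
  case 0 then show ?case by simp
next
  case (Suc m)
  have "{..<Suc m * n} = {..<m*n} \<union> {m*n..<m*n+n}" by auto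
  hence "(\<Sum>k<Suc m*n. f (k div n) (k mod n)) = (\<Sum>k<m*n. f (k div n) (k mod n)) + (\<Sum>k\<in>{m*n..<m*n+n}. f (k div n) (k mod n))"
    by (simp add: sum.union_disjoint ivl_disj_int)
  also have "(\<Sum>k\<in>{m*n..<m*n+n}. f (k div n) (k mod n)) = (\<Sum>s<n. f m s)"
  proof -
    have "(\<Sum>k\<in>{m*n..<m*n+n}. f (k div n) (k mod n)) = (\<Sum>s<n. f ((m*n+s) div n) ((m*n+s) mod n))"
      by (rule sum.reindex_bij_witness[of _ "\<lambda>s. m*n+s" "\<lambda>k. k - m*n"]) auto
    also have "\<dots> = (\<Sum>s<n. f m s)"
      by (rule sum.cong) auto
    finally show ?thesis .
  qed
  finally show ?case using Suc by simp
qed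

lemma ev_int_mult:
  assumes "ev_int a" "ev_int b" shows "ev_int (a*b)"
proof -
  obtain m :: nat and A w where exa: "\<exists>i<m. w i \<noteq> 0" and eqa: "\<forall>i<m. a * w i = (\<Sum>t<m. of_int (A i t) * w t)"
    using assms(1) unfolding ev_int_def by auto
  obtain i0 where i0: "i0 < m" "w i0 \<noteq> 0" using exa by blast
  obtain n :: nat and B u where exb: "\<exists>i<n. u i \<noteq> 0" and eqb: "\<forall>i<n. b * u i = (\<Sum>t<n. of_int (B i t) * u t)"
    using assms(2) unfolding ev_int_def by auto
  obtain j0 where j0: "j0 < n" "u j0 \<noteq> 0" using exb by blast
  define C where "C = (\<lambda>k k'. A (k div n) (k' div n) * B (k mod n) (k' mod n))"
  define z where "z = (\<lambda>k. w (k div n) * u (k mod n))"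
  have "i0*n+j0 < m*n"
  proof -
    have "i0*n+j0 < i0*n + n" using j0 by simp
    also have "\<dots> = Suc i0 * n" by simp
    also have "\<dots> \<le> m*n" using i0 by (intro mult_right_mono) auto
    finally show ?thesis .
  qed
  moreover have "z (i0*n+j0) \<noteq> 0" using i0 j0 by (simp add: z_def)
  moreover have "\<forall>k<m*n. a*b * z k = (\<Sum>k'<m*n. of_int (C k k') * z k')"
  proof (intro allI impI)
    fix k assume k: "k < m*n"
    have n: "n > 0" using k by (cases n) auto
    have i: "k div n < m" using k by (simp add: div_less_iff_less_mult n)
    have j: "k mod n < n" using n by simp
    have "a*b*z k = (a * w (k div n)) * (b * u (k mod n))" by (simp add: z_def algebra_simps)
    also have "\<dots> = (\<Sum>t<m. of_int (A (k div n) t) * w t) * (\<Sum>s<n. of_int (B (k mod n) s) * u s)"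
      using eqa eqb i j by simp
    also have "\<dots> = (\<Sum>t<m. \<Sum>s<n. of_int (A (k div n) t) * w t * (of_int (B (k mod n) s) * u s))"
      by (simp add: sum_product)
    also have "\<dots> = (\<Sum>k'<m*n. of_int (C k k') * z k')"
      unfolding sum_div_mod[symmetric] C_def z_def by (intro sum.cong) (auto simp: algebra_simps)
    finally show "a*b * z k = (\<Sum>k'<m*n. of_int (C k k') * z k')" .
  qed
  ultimately show ?thesis unfolding ev_int_def by auto
qed

lemma ev_int_1: "ev_int 1"
  unfolding ev_int_def
  by (rule exI[of _ 1], rule exI[of _ "\<lambda>_ _. 1"], rule exI[of _ "\<lambda>_. 1"]) auto

lemma ev_lead:
  fixes c :: "nat \<Rightarrow> int" and x :: complex
  assumes m: "m \<ge> 1" and root: "(\<Sum>t\<le>m. of_int (c t) * x^t) = 0"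
  shows "ev_int (of_int (c m) * x)"
proof -
  define A where "A = (\<lambda>i t. if Suc i < m then (if t = Suc i then c m else 0) else - c t)"
  have "\<forall>i<m. of_int (c m) * x * x^i = (\<Sum>t<m. of_int (A i t) * x^t)"
  proof (intro allI impI)
    fix i assume i: "i < m"
    show "of_int (c m) * x * x^i = (\<Sum>t<m. of_int (A i t) * x^t)"
    proof (cases "Suc i < m")
      case True
      have "(\<Sum>t<m. of_int (A i t) * x^t) = (\<Sum>t<m. if t = Suc i then of_int (c m) * x^t else 0)"
        by (intro sum.cong) (auto simp: A_def True)
      also have "\<dots> = of_int (c m) * x^Suc i" using True by (simp add: sum.delta)
      finally show ?thesis by simp
    next
      case False
      hence mi: "m = Suc i" using i by simp
      have "(\<Sum>t\<le>m. of_int (c t) * x^t) = (\<Sum>t<m. of_int (c t) * x^t) + of_int (c m) * x^m"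
        by (simp add: lessThan_Suc_atMost[symmetric])
      hence "(\<Sum>t<m. of_int (c t) * x^t) = - (of_int (c m) * x^m)" using root by (simp add: eq_neg_iff_add_eq_0)
      moreover have "(\<Sum>t<m. of_int (A i t) * x^t) = - (\<Sum>t<m. of_int (c t) * x^t)"
        by (simp add: A_def False sum_negf)
      ultimately show ?thesis using mi by simp
    qed
  qed
  moreover have "\<exists>i<m. x^i \<noteq> 0" using m by (intro exI[of _ 0]) auto
  ultimately show ?thesis unfolding ev_int_def
    by (intro exI[of _ m] exI[of _ A] exI[of _ "\<lambda>i. x^i"]) (simp add: mult.assoc)
qed


abbreviation ipoly :: "int poly \<Rightarrow> complex \<Rightarrow> complex" where
  "ipoly f x \<equiv> poly (map_poly of_int f) x"

lemma ipoly_deg_pos: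
  assumes "f \<noteq> 0" "ipoly f x = 0" shows "degree f \<ge> 1"
proof (rule ccontr)
  assume "\<not> degree f \<ge> 1"
  hence "degree f = 0" by simp
  then obtain c where "f = [:c:]" by (metis degree_eq_zeroE)
  thus False using assms by simp
qed

lemma algebraic_ipoly:
  assumes "algebraic (x::complex)" shows "\<exists>f. f \<noteq> 0 \<and> ipoly f x = 0"
proof -
  obtain p where p: "\<And>i. coeff p i \<in> \<int>" "p \<noteq> 0" "poly p x = 0"
    using assms by (elim algebraicE) blast
  define the_int where "the_int = (\<lambda>x::complex. THE r. x = of_int r)"
  define p' where "p' = map_poly the_int p"
  have of_int_the_int: "of_int (the_int x) = x" if "x \<in> \<int>" for x
    unfolding the_int_def by (rule sym, rule theI') (insert that, auto simp: Ints_def)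
  have the_int_0_iff: "the_int x = 0 \<longleftrightarrow> x = 0" if "x \<in> \<int>" for x
    using of_int_the_int[OF that] by auto
  have [simp]: "the_int 0 = 0"
    by (subst the_int_0_iff) auto
  have "map_poly of_int p' = map_poly (of_int \<circ> the_int) p"
    by (simp add: p'_def map_poly_map_poly)
  also from p of_int_the_int have "\<dots> = p"
    by (subst poly_eq_iff) (auto simp: coeff_map_poly)
  finally have p_p': "map_poly of_int p' = p" .
  have "p' \<noteq> 0" using p_p' p(2) by auto
  thus ?thesis using p_p' p(3) by auto
qed

lemma min_deg_exists:
  assumes "algebraic (x::complex)"
  shows "\<exists>r. r \<noteq> 0 \<and> ipoly r x = 0 \<and> (\<forall>s. s \<noteq> 0 \<and> ipoly s x = 0 \<longrightarrow> degree r \<le> degree s)"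
proof -
  obtain f where "f \<noteq> 0 \<and> ipoly f x = 0" using algebraic_ipoly[OF assms] by blast
  from ex_has_least_nat[of "\<lambda>f. f \<noteq> 0 \<and> ipoly f x = 0", OF this, of degree]
  show ?thesis by blast
qed

lemma min_deg_dvd:
  assumes r: "r \<noteq> 0" "ipoly r x = 0" and rmin: "\<forall>s. s \<noteq> 0 \<and> ipoly s x = 0 \<longrightarrow> degree r \<le> degree s"
    and p: "irreducible p" "ipoly p x = 0"
  shows "\<exists>c. c \<noteq> 0 \<and> r = Polynomial.smult c p"
proof -
  define R where "R = pseudo_mod p r"
  obtain a Q where aQ: "a \<noteq> 0" "Polynomial.smult a p = r * Q + R" and R: "R = 0 \<or> degree R < degree r"
    using pseudo_mod[OF r(1), of p] unfolding R_def by blast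
  have "ipoly (Polynomial.smult a p) x = ipoly (r * Q + R) x" using aQ by simp
  hence "ipoly R x = 0" using r p by (simp add: hom_distribs)
  have R0: "R = 0"
  proof (rule ccontr)
    assume "R \<noteq> 0"
    hence "degree r \<le> degree R" using rmin \<open>ipoly R x = 0\<close> by blast
    thus False using R \<open>R \<noteq> 0\<close> by simp
  qed
  have pne: "p \<noteq> 0" using p by auto
  have "prime_elem p" using p by (simp add: prime_elem_iff_irreducible)
  moreover have "p dvd r * Q"
  proof -
    have "p dvd Polynomial.smult a p" by (rule dvd_smult) simp
    thus ?thesis using aQ R0 by simp
  qed
  ultimately have "p dvd r \<or> p dvd Q" by (simp add: prime_elem_dvd_mult_iff)
  thus ?thesis
  proof
    assume "p dvd Q"
    then obtain Q' where Q': "Q = p * Q'" by (auto elim: dvdE)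
    have "[:a:] * p = (r * Q') * p" using aQ R0 Q' by (simp add: algebra_simps)
    hence "[:a:] = r * Q'" using pne by (metis mult_cancel_right)
    hence "degree (r * Q') = 0" by (metis degree_pCons_0)
    moreover have "Q' \<noteq> 0" using \<open>[:a:] = r * Q'\<close> aQ by auto
    ultimately have "degree r = 0" using r by (simp add: degree_mult_eq)
    thus ?thesis using ipoly_deg_pos[OF r] by simp
  next
    assume "p dvd r"
    then obtain u where u: "r = p * u" by (auto elim: dvdE)
    have une: "u \<noteq> 0" using u r by auto
    have "degree r \<le> degree p" using rmin p pne by blast
    moreover have "degree r = degree p + degree u" using u une pne by (simp add: degree_mult_eq)
    ultimately have "degree u = 0" by simp
    then obtain c where "u = [:c:]" by (metis degree_eq_zeroE)
    thus ?thesis using u une by (intro exI[of _ c]) auto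
  qed
qed

lemma irreducible_content:
  fixes p :: "int poly"
  assumes "irreducible p" "degree p \<ge> 1" shows "content p = 1"
proof -
  obtain q where q: "p = [:content p:] * q" using content_dvd by (metis dvdE)
  from irreducibleD[OF assms(1) q] have "is_unit [:content p:] \<or> is_unit q" .
  thus ?thesis
  proof
    assume "is_unit q"
    then obtain d where "q = [:d:]" by (auto simp: is_unit_poly_iff)
    hence "degree ([:content p:] * q) = 0" by simp
    hence "degree p = 0" using q by metis
    thus ?thesis using assms by simp
  next
    assume "is_unit [:content p:]"
    thus ?thesis by (metis is_unit_content_iff is_unit_poly_iff pCons_eq_iff)
  qed
qed

lemma min_poly_unique:
  assumes "algebraic x"
    and p: "irreducible p" "lead_coeff p > 0" "ipoly p x = 0"
    and q: "irreducible q" "lead_coeff q > 0" "ipoly q x = 0"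
  shows "p = q"
proof -
  obtain r where r: "r \<noteq> 0" "ipoly r x = 0" and rmin: "\<forall>s. s \<noteq> 0 \<and> ipoly s x = 0 \<longrightarrow> degree r \<le> degree s"
    using min_deg_exists[OF assms(1)] by blast
  obtain c where c: "c \<noteq> 0" "r = Polynomial.smult c p" using min_deg_dvd[OF r rmin p(1,3)] by blast
  obtain d where d: "d \<noteq> 0" "r = Polynomial.smult d q" using min_deg_dvd[OF r rmin q(1,3)] by blast
  have cp: "content p = 1" using irreducible_content[OF p(1) ipoly_deg_pos[OF _ p(3)]] p by auto
  have cq: "content q = 1" using irreducible_content[OF q(1) ipoly_deg_pos[OF _ q(3)]] q by auto
  have "content r = \<bar>c\<bar>" using c cp by (simp add: content_smult)
  moreover have "content r = \<bar>d\<bar>" using d cq by (simp add: content_smult)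
  ultimately have abs: "\<bar>c\<bar> = \<bar>d\<bar>" by simp
  have "lead_coeff r = c * lead_coeff p" using c by simp
  moreover have "lead_coeff r = d * lead_coeff q" using d by simp
  ultimately have "c * lead_coeff p = d * lead_coeff q" by simp
  note eq = this
  have "c = d"
  proof (rule ccontr)
    assume "c \<noteq> d"
    hence "c = -d" using abs by arith
    hence "d * (lead_coeff p + lead_coeff q) = 0" using eq by (simp add: algebra_simps)
    thus False using d(1) p(2) q(2) by simp
  qed
  hence "\<forall>n. d * coeff p n = d * coeff q n" using c d by (metis coeff_smult)
  thus ?thesis using d(1) by (intro poly_eqI) simp
qed

lemma min_poly_exists:
  assumes "algebraic x"
  shows "\<exists>p. irreducible p \<and> lead_coeff p > 0 \<and> ipoly p x = 0"
proof -
  obtain r where r: "r \<noteq> 0" "ipoly r x = 0" and rmin: "\<forall>s. s \<noteq> 0 \<and> ipoly s x = 0 \<longrightarrow> degree r \<le> degree s"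
    using min_deg_exists[OF assms(1)] by blast
  define s :: int where "s = sgn (lead_coeff (primitive_part r))"
  define r1 where "r1 = Polynomial.smult s (primitive_part r)"
  have r0: "primitive_part r \<noteq> 0" using r by simp
  have L0: "lead_coeff (primitive_part r) \<noteq> 0" by (rule leading_coeff_neq_0[OF r0])
  have s: "s = 1 \<or> s = -1" using L0 unfolding s_def by (auto simp: sgn_if simp del: degree_primitive_part)
  have r1ne: "r1 \<noteq> 0" using s r0 unfolding r1_def by auto
  have "ipoly r x = of_int (content r) * ipoly (primitive_part r) x"
    by (metis content_times_primitive_part of_int_hom.map_poly_hom_smult poly_smult)
  hence "ipoly (primitive_part r) x = 0" using r by simp
  hence r1root: "ipoly r1 x = 0" unfolding r1_def by (simp add: hom_distribs)
  have degr1: "degree r1 = degree r" using s unfolding r1_def by auto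
  have cr1: "content r1 = 1" using s r unfolding r1_def by (auto simp: content_smult)
  have L: "coeff (primitive_part r) (degree r) \<noteq> 0" using leading_coeff_neq_0[OF r0] by simp
  have "lead_coeff r1 = s * coeff (primitive_part r) (degree r)" unfolding r1_def using s by auto
  hence lr1: "lead_coeff r1 > 0" using L by (auto simp: s_def sgn_if)
  have key: "is_unit b" if ab: "r1 = a * b" and aroot: "ipoly a x = 0" for a b
  proof -
    have ane: "a \<noteq> 0" "b \<noteq> 0" using ab r1ne by auto
    have "degree r \<le> degree a" using rmin ane aroot by blast
    moreover have "degree r1 = degree a + degree b" using ab ane by (simp add: degree_mult_eq)
    ultimately have "degree b = 0" using degr1 by simp
    then obtain c where bc: "b = [:c:]" by (metis degree_eq_zeroE)
    have "[:c:] dvd r1" using ab bc by (metis dvd_triv_right)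
    hence "c dvd 1" using cr1 by (simp add: const_poly_dvd_iff_dvd_content)
    thus ?thesis using bc by (simp add: is_unit_poly_iff)
  qed
  have "irreducible r1"
  proof (rule irreducibleI)
    show "r1 \<noteq> 0" by fact
    show "\<not> is_unit r1"
      using ipoly_deg_pos[OF r1ne r1root] by (auto simp: is_unit_poly_iff)
    fix a b assume ab: "r1 = a * b"
    hence "ipoly a x * ipoly b x = 0" using r1root by (simp add: hom_distribs)
    hence "ipoly a x = 0 \<or> ipoly b x = 0" by simp
    thus "is_unit a \<or> is_unit b"
      using key[OF ab] key[of b a] ab by (auto simp: mult.commute)
  qed
  thus ?thesis using lr1 r1root by blast
qed

lemma min_int_poly_props:
  assumes "algebraic x"
  shows "irreducible (min_int_poly x) \<and> lead_coeff (min_int_poly x) > 0 \<and> ipoly (min_int_poly x) x = 0"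
proof -
  have "\<exists>!p. irreducible p \<and> lead_coeff p > 0 \<and> ipoly p x = 0"
    using min_poly_exists[OF assms] min_poly_unique[OF assms] by blast
  thus ?thesis unfolding min_int_poly_def by (rule theI')
qed

lemma min_int_poly_eq:
  assumes "algebraic x" "irreducible p" "lead_coeff p > 0" "ipoly p x = 0"
  shows "min_int_poly x = p"
  using min_int_poly_props[OF assms(1)] min_poly_unique[OF assms(1)] assms(2-4) by blast


lemma mahler_poly_ge_lead: "mahler_poly f \<ge> \<bar>of_int (lead_coeff f)\<bar>"
proof -
  have "(\<Prod>z\<in>{z. poly (map_poly of_int f) z = 0}. max 1 (cmod z) ^ order z (map_poly of_int f :: complex poly)) \<ge> 1"
    by (intro prod_ge_1 one_le_power) auto
  thus ?thesis unfolding mahler_poly_def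
    by (metis abs_ge_zero mult.right_neutral mult_left_mono of_int_abs)
qed

lemma mahler_poly_ge_coeff0:
  assumes "f \<noteq> 0"
  shows "mahler_poly f \<ge> \<bar>of_int (coeff f 0)\<bar>"
proof -
  define F :: "complex poly" where "F = map_poly of_int f"
  define Z where "Z = {z. poly F z = 0}"
  have "poly F 0 = poly (Polynomial.smult (lead_coeff F) (\<Prod>z\<in>Z. [:-z, 1:] ^ order z F)) 0"
    unfolding Z_def by (subst complex_poly_decompose) simp
  also have "\<dots> = lead_coeff F * (\<Prod>z\<in>Z. (-z) ^ order z F)"
    by (simp add: poly_prod poly_power)
  finally have eq: "poly F 0 = lead_coeff F * (\<Prod>z\<in>Z. (-z) ^ order z F)" .
  have "poly F 0 = of_int (coeff f 0)" unfolding F_def by (simp add: poly_0_coeff_0)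
  moreover have "lead_coeff F = of_int (lead_coeff f)" unfolding F_def by simp
  moreover have "cmod (poly F 0) = cmod (lead_coeff F) * (\<Prod>z\<in>Z. cmod z ^ order z F)"
    using eq by (simp add: norm_mult prod_norm[symmetric] norm_power)
  ultimately have "\<bar>real_of_int (coeff f 0)\<bar> = \<bar>real_of_int (lead_coeff f)\<bar> * (\<Prod>z\<in>Z. cmod z ^ order z F)"
    by (metis norm_of_int)
  also have "\<dots> \<le> \<bar>real_of_int (lead_coeff f)\<bar> * (\<Prod>z\<in>Z. max 1 (cmod z) ^ order z F)"
    by (intro mult_left_mono prod_mono power_mono conjI) auto
  also have "\<dots> = mahler_poly f" unfolding mahler_poly_def F_def Z_def by simp
  finally show ?thesis .
qed

lemma mahler_rat:
  fixes a b :: int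
  assumes b: "b > 0" and cop: "coprime a b"
  shows "mahler (of_int a / of_int b) = max \<bar>real_of_int a\<bar> (real_of_int b)"
proof -
  define x :: complex where "x = of_int a / of_int b"
  define p where "p = [:-a, b:]"
  have "algebraic x" unfolding x_def by (intro rat_imp_algebraic) simp
  moreover have "irreducible p" unfolding p_def using b cop by (intro irreducible_linear_poly) auto
  moreover have "lead_coeff p > 0" using b by (simp add: p_def)
  moreover have "ipoly p x = 0" using b by (simp add: p_def x_def)
  ultimately have mp: "min_int_poly x = p" by (rule min_int_poly_eq)
  have bne: "(of_int b :: complex) \<noteq> 0" using b by simp
  have P: "(map_poly of_int p :: complex poly) = Polynomial.smult (of_int b) ([:-x, 1:]^1)"
    using bne by (simp add: p_def x_def)
  have Z: "{z. poly (map_poly of_int p) z = 0} = {x}"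
    using bne by (auto simp: P)
  have "order x (map_poly of_int p :: complex poly) = 1"
    unfolding P by (subst order_smult[OF bne], rule order_power_n_n)
  hence "mahler x = real_of_int \<bar>b\<bar> * max 1 (cmod x)"
    unfolding mahler_def mp mahler_poly_def Z using b by (simp add: p_def)
  also have "cmod x = \<bar>real_of_int a\<bar> / real_of_int b"
    unfolding x_def using b by (simp add: norm_divide)
  also have "real_of_int \<bar>b\<bar> * max 1 (\<bar>real_of_int a\<bar> / real_of_int b) = max \<bar>real_of_int a\<bar> (real_of_int b)"
    using b by (simp add: max_def field_simps)
  finally show ?thesis unfolding x_def .
qed


lemma ev_prod_list:
  assumes "\<forall>y\<in>set ys. \<exists>(c::nat\<Rightarrow>int) m. m \<ge> 1 \<and> (\<Sum>t\<le>m. of_int (c t) * y^t) = 0 \<and> c m = L y"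
  shows "ev_int (of_int (prod_list (map L ys)) * prod_list ys)"
  using assms
proof (induction ys)
  case Nil thus ?case by (simp add: ev_int_1)
next
  case (Cons y ys)
  then obtain c m where cm: "m \<ge> 1" "(\<Sum>t\<le>m. of_int (c t) * y^t) = 0" "c m = L y" by auto
  have "ev_int (of_int (L y) * y)" using ev_lead[OF cm(1,2)] cm(3) by simp
  moreover have "ev_int (of_int (prod_list (map L ys)) * prod_list ys)" using Cons by simp
  ultimately have "ev_int ((of_int (L y) * y) * (of_int (prod_list (map L ys)) * prod_list ys))"
    by (rule ev_int_mult)
  thus ?case by (simp add: algebra_simps)
qed

lemma ev_rat_dvd:
  fixes K a b :: int
  assumes ev: "ev_int (of_int K * (of_int a / of_int b))" and b: "b \<noteq> 0" and cop: "coprime a b"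
  shows "b dvd K"
proof -
  have ai: "algebraic_int (of_int K * (of_int a / of_int b) :: complex)" using ev by (rule ev_int_imp_algebraic_int)
  have "(of_int K * (of_int a / of_int b) :: complex) = of_rat (of_int K * (of_int a / of_int b))"
    by (simp add: of_rat_mult of_rat_divide)
  hence "(of_int K * (of_int a / of_int b) :: complex) \<in> \<rat>" by (metis Rats_of_rat)
  from rational_algebraic_int_is_int[OF ai this] obtain n where
    n: "(of_int K * (of_int a / of_int b) :: complex) = of_int n" by (auto elim: Ints_cases)
  hence "(of_int (K * a) :: complex) = of_int (n * b)" using b by (simp add: field_simps)
  hence "K * a = n * b" using of_int_eq_iff by blast
  hence "b dvd K * a" by simp
  thus ?thesis using cop by (simp add: coprime_commute coprime_dvd_mult_left_iff)
qed

lemma prime_dvd_prod_list_int: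
  assumes "prime (p::int)" "p dvd prod_list xs" shows "\<exists>x\<in>set xs. p dvd x"
  using assms(2)
proof (induction xs)
  case Nil thus ?case using assms(1) by (metis not_prime_unit prod_list.Nil)
next
  case (Cons x xs) thus ?case using assms(1) by (auto simp: prime_dvd_mult_iff)
qed

lemma ipoly_sum: "ipoly f y = (\<Sum>t\<le>degree f. of_int (coeff f t) * y^t)"
  by (simp add: poly_altdef of_int_hom.degree_map_poly_hom)

lemma ipoly_sum_inverse:
  assumes "ipoly f y = 0" "y \<noteq> 0"
  shows "(\<Sum>t\<le>degree f. of_int (coeff f (degree f - t)) * (inverse y)^t) = 0"
proof -
  define m where "m = degree f"
  have "y^m * (\<Sum>t\<le>m. of_int (coeff f (m - t)) * (inverse y)^t) = (\<Sum>t\<le>m. of_int (coeff f (m - t)) * y^(m-t))"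
    unfolding sum_distrib_left
  proof (intro sum.cong refl)
    fix t assume "t \<in> {..m}"
    hence "y^m = y^(m-t) * y^t" by (simp add: power_add[symmetric])
    thus "y^m * (of_int (coeff f (m - t)) * inverse y ^ t) = of_int (coeff f (m - t)) * y ^ (m - t)"
      using assms(2) by (simp add: field_simps power_inverse)
  qed
  also have "\<dots> = (\<Sum>s\<le>m. of_int (coeff f s) * y^s)"
    by (rule sum.reindex_bij_witness[of _ "\<lambda>s. m - s" "\<lambda>t. m - t"]) auto
  also have "\<dots> = 0" using assms(1) unfolding m_def ipoly_sum .
  finally show ?thesis using assms(2) unfolding m_def by simp
qed

lemma irreducible_coeff0:
  assumes "irreducible f" "ipoly f x = 0" "x \<noteq> 0"
  shows "coeff f 0 \<noteq> 0"
proof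
  assume "coeff f 0 = 0"
  hence "poly f (-0) = 0" by (simp add: poly_0_coeff_0)
  hence "[:0, 1:] dvd f" by (subst dvd_iff_poly_eq_0) simp
  then obtain g where g: "f = [:0,1:] * g" by (auto elim: dvdE)
  from irreducibleD[OF assms(1) g] have "is_unit [:0,1::int:] \<or> is_unit g" .
  moreover have "\<not> is_unit [:0,1::int:]" by (simp add: is_unit_poly_iff)
  ultimately obtain u where "g = [:u:]" "u \<noteq> 0" by (auto simp: is_unit_poly_iff)
  hence "ipoly f x = of_int u * x" using g by simp
  thus False using assms(2,3) \<open>u \<noteq> 0\<close> by simp
qed

lemma lower_bound:
  fixes q :: rat and P :: nat
  assumes xs: "\<forall>x\<in>set xs. algebraic x \<and> x \<noteq> 0" "prod_list xs = of_rat q"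
    and P: "prime P" "int P dvd fst (quotient_of q) \<or> int P dvd snd (quotient_of q)"
  shows "\<exists>x\<in>set xs. real P \<le> mahler x"
proof -
  obtain a b where ab: "quotient_of q = (a, b)" by (cases "quotient_of q") auto
  have b: "b > 0" using quotient_of_denom_pos[OF ab] .
  have cop: "coprime a b" using quotient_of_coprime[OF ab] .
  have qab: "q = of_int a / of_int b" using quotient_of_div[OF ab] .
  have Pi: "prime (int P)" using P(1) by simp
  have props: "irreducible (min_int_poly x) \<and> lead_coeff (min_int_poly x) > 0 \<and> ipoly (min_int_poly x) x = 0"
    if "x \<in> set xs" for x using min_int_poly_props xs(1) that by blast
  have deg: "degree (min_int_poly x) \<ge> 1" if "x \<in> set xs" for x
    using props[OF that] ipoly_deg_pos[of "min_int_poly x" x] by auto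
  have prodq: "prod_list xs = of_int a / of_int b" using xs(2) qab by (simp add: of_rat_divide)
  show ?thesis
  proof (cases "int P dvd b")
    case True
    define L where "L = (\<lambda>x. lead_coeff (min_int_poly x))"
    have "\<forall>y\<in>set xs. \<exists>(c::nat\<Rightarrow>int) m. m \<ge> 1 \<and> (\<Sum>t\<le>m. of_int (c t) * y^t) = 0 \<and> c m = L y"
    proof
      fix y assume y: "y \<in> set xs"
      show "\<exists>(c::nat\<Rightarrow>int) m. m \<ge> 1 \<and> (\<Sum>t\<le>m. of_int (c t) * y^t) = 0 \<and> c m = L y"
        using deg[OF y] props[OF y] unfolding L_def
        by (intro exI[of _ "coeff (min_int_poly y)"] exI[of _ "degree (min_int_poly y)"]) (simp add: ipoly_sum[symmetric])
    qed
    from ev_prod_list[OF this] have "ev_int (of_int (prod_list (map L xs)) * (of_int a / of_int b))"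
      using prodq by simp
    hence "b dvd prod_list (map L xs)" using ev_rat_dvd b cop by auto
    hence "int P dvd prod_list (map L xs)" by (rule dvd_trans[OF True])
    from prime_dvd_prod_list_int[OF Pi this] obtain x where x: "x \<in> set xs" "int P dvd L x" by auto
    have "L x > 0" using props[OF x(1)] unfolding L_def by simp
    hence "int P \<le> L x" using x(2) by (simp add: zdvd_imp_le)
    hence "real P \<le> \<bar>real_of_int (L x)\<bar>" by linarith
    also have "\<dots> \<le> mahler x" unfolding mahler_def L_def by (rule mahler_poly_ge_lead)
    finally show ?thesis using x(1) by blast
  next
    case False
    hence Pa: "int P dvd a" using P(2) ab by simp
    have a0: "a \<noteq> 0"
    proof
      assume "a = 0"
      hence "q = 0" using qab by simp
      hence "prod_list xs = 0" using xs(2) by simp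
      thus False using xs(1) by (auto simp: prod_list_zero_iff)
    qed
    define L where "L = (\<lambda>x. coeff (min_int_poly x) 0)"
    show ?thesis
    proof (rule ccontr)
      assume H: "\<not> (\<exists>x\<in>set xs. real P \<le> mahler x)"
      have nd: "\<not> int P dvd L x" if x: "x \<in> set xs" for x
      proof
        assume d: "int P dvd L x"
        have "L x \<noteq> 0" unfolding L_def using irreducible_coeff0 props[OF x] xs(1) x by blast
        hence "int P \<le> \<bar>L x\<bar>" using d by (metis dvd_imp_le_int abs_of_nat)
        hence "real P \<le> \<bar>real_of_int (L x)\<bar>" by linarith
        also have "\<dots> \<le> mahler x" unfolding mahler_def L_def
          using props[OF x] by (intro mahler_poly_ge_coeff0) auto
        finally show False using H x by blast
      qed
      have "\<forall>y\<in>set (map inverse xs). \<exists>(c::nat\<Rightarrow>int) m. m \<ge> 1 \<and> (\<Sum>t\<le>m. of_int (c t) * y^t) = 0 \<and> c m = L (inverse y)"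
      proof
        fix y assume "y \<in> set (map inverse xs)"
        then obtain x where x: "x \<in> set xs" "y = inverse x" by auto
        show "\<exists>(c::nat\<Rightarrow>int) m. m \<ge> 1 \<and> (\<Sum>t\<le>m. of_int (c t) * y^t) = 0 \<and> c m = L (inverse y)"
          using deg[OF x(1)] props[OF x(1)] ipoly_sum_inverse[of "min_int_poly x" x] xs(1) x unfolding L_def
          by (intro exI[of _ "\<lambda>t. coeff (min_int_poly x) (degree (min_int_poly x) - t)"] exI[of _ "degree (min_int_poly x)"]) simp
      qed
      from ev_prod_list[OF this] have ev: "ev_int (of_int (prod_list (map (\<lambda>y. L (inverse y)) (map inverse xs))) * prod_list (map inverse xs))" .
      have "prod_list (map inverse xs) = inverse (prod_list xs)"
        by (induction xs) (auto simp: mult.commute)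
      also have "\<dots> = of_int b / of_int a" using prodq by simp
      finally have "prod_list (map inverse xs) = of_int b / of_int a" .
      moreover have e2: "map (\<lambda>y. L (inverse y)) (map inverse xs) = map L xs" by (induction xs) auto
      have "ev_int (of_int (prod_list (map L xs)) * prod_list (map inverse xs))" using ev by (simp only: e2)
      ultimately have "ev_int (of_int (prod_list (map L xs)) * (of_int b / of_int a))" by simp
      hence "a dvd prod_list (map L xs)" using ev_rat_dvd a0 cop by (auto simp: coprime_commute)
      hence "int P dvd prod_list (map L xs)" by (rule dvd_trans[OF Pa])
      from prime_dvd_prod_list_int[OF Pi this] obtain x where "x \<in> set xs" "int P dvd L x" by auto
      thus False using nd by blast
    qed
  qed
qed


lemma mahler_nat: "prime p \<Longrightarrow> mahler (of_nat p) = real p"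
  using mahler_rat[of 1 "int p"] prime_ge_1_nat[of p] by (simp add: max_def)

lemma mahler_inv_nat: "prime p \<Longrightarrow> mahler (inverse (of_nat p)) = real p"
  using mahler_rat[of "int p" 1] prime_ge_1_nat[of p] by (simp add: prime_gt_0_nat divide_inverse max_def)

lemma mahler_m1: "mahler (-1) = 1"
  using mahler_rat[of 1 "-1"] by simp


lemma prod_list_of_nat: "prod_list (map (\<lambda>p. of_nat p :: complex) l) = of_nat (prod_list l)"
  by (induction l) auto

lemma prod_list_inv_nat: "prod_list (map (\<lambda>p. inverse (of_nat p) :: complex) l) = inverse (of_nat (prod_list l))"
  by (induction l) (auto simp: mult.commute)

lemma pf_list:
  assumes "n > (0::nat)" "mset l = prime_factorization n"
  shows "prod_list l = n" "\<And>p. p \<in> set l \<Longrightarrow> prime p \<and> p dvd n"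
proof -
  show "prod_list l = n" using assms by (metis prod_mset_prime_factorization_nat prod_mset_prod_list)
  fix p assume "p \<in> set l"
  hence "p \<in> prime_factors n" using assms(2) by (metis set_mset_mset)
  thus "prime p \<and> p dvd n" by (simp add: in_prime_factors_iff)
qed

theorem mainTheorem3:
  fixes q :: rat
  assumes "q \<noteq> 0" and "q \<noteq> 1" and "q \<noteq> -1"
  shows "mahler_ultra (of_rat q) =
    real (Max {p::nat. prime p \<and> (int p dvd fst (quotient_of q) \<or> int p dvd snd (quotient_of q))})"
proof -
  obtain a b where ab: "quotient_of q = (a, b)" by (cases "quotient_of q") auto
  have b: "b > 0" using quotient_of_denom_pos[OF ab] .
  have cop: "coprime a b" using quotient_of_coprime[OF ab] .
  have qab: "q = of_int a / of_int b" using quotient_of_div[OF ab] .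
  have a0: "a \<noteq> 0" using assms(1) qab by auto
  define S where "S = {p::nat. prime p \<and> (int p dvd fst (quotient_of q) \<or> int p dvd snd (quotient_of q))}"
  have S': "S = {p. prime p \<and> (int p dvd a \<or> int p dvd b)}" using ab by (simp add: S_def)
  have finS: "finite S"
  proof (rule finite_subset)
    show "S \<subseteq> {..nat \<bar>a\<bar> + nat b}"
    proof
      fix p assume "p \<in> S"
      hence "int p dvd a \<or> int p dvd b" using S' by auto
      thus "p \<in> {..nat \<bar>a\<bar> + nat b}"
      proof
        assume "int p dvd a" hence "\<bar>int p\<bar> \<le> \<bar>a\<bar>" using a0 by (rule dvd_imp_le_int[rotated])
        thus ?thesis by simp
      next
        assume "int p dvd b" hence "\<bar>int p\<bar> \<le> \<bar>b\<bar>" using b by (intro dvd_imp_le_int) auto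
        thus ?thesis using b by simp
      qed
    qed
  qed simp
  have neS: "S \<noteq> {}"
  proof (cases "nat \<bar>a\<bar> = 1")
    case False
    then obtain p where "prime p" "p dvd nat \<bar>a\<bar>" using prime_factor_nat by blast
    hence "int p dvd a" by (metis dvd_abs_iff int_dvd_int_iff int_nat_eq abs_ge_zero)
    thus ?thesis using S' \<open>prime p\<close> by auto
  next
    case True
    have "b \<noteq> 1"
    proof
      assume "b = 1"
      hence "q = of_int a" using qab by simp
      moreover have "a = 1 \<or> a = -1" using True by arith
      ultimately show False using assms by auto
    qed
    hence "nat b \<noteq> 1" using b by simp
    then obtain p where "prime p" "p dvd nat b" using prime_factor_nat by blast
    hence "int p dvd b" using b by (metis int_dvd_int_iff int_nat_eq less_imp_le)
    thus ?thesis using S' \<open>prime p\<close> by auto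
  qed
  define P where "P = Max S"
  have PS: "P \<in> S" unfolding P_def using finS neS by (rule Max_in)
  hence Pprime: "prime P" using S' by auto
  hence P1: "real P \<ge> 1" using prime_ge_1_nat by auto
  have leP: "real p \<le> real P" if "p \<in> S" for p using Max_ge[OF finS that] unfolding P_def by simp
  define T where "T = {Max (mahler ` set xs) | xs. xs \<noteq> [] \<and>
      (\<forall>x\<in>set xs. algebraic x \<and> x \<noteq> 0) \<and> prod_list xs = (of_rat q :: complex)}"
  have lower: "real P \<le> t" if "t \<in> T" for t
  proof -
    obtain xs where xs: "t = Max (mahler ` set xs)" "xs \<noteq> []" "\<forall>x\<in>set xs. algebraic x \<and> x \<noteq> 0"
      "prod_list xs = (of_rat q :: complex)" using \<open>t \<in> T\<close> unfolding T_def by blast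
    have "int P dvd fst (quotient_of q) \<or> int P dvd snd (quotient_of q)" using PS S_def by auto
    from lower_bound[OF xs(3,4) Pprime this] obtain x where "x \<in> set xs" "real P \<le> mahler x" by blast
    moreover have "mahler x \<le> Max (mahler ` set xs)" using \<open>x \<in> set xs\<close> by (intro Max_ge) auto
    ultimately show ?thesis using xs(1) by linarith
  qed
  obtain la where la: "mset la = prime_factorization (nat \<bar>a\<bar>)" using ex_mset by blast
  obtain lb where lb: "mset lb = prime_factorization (nat b)" using ex_mset by blast
  have na: "nat \<bar>a\<bar> > 0" using a0 by simp
  have nb: "nat b > 0" using b by simp
  note LA = pf_list[OF na la] and LB = pf_list[OF nb lb]
  define xs :: "complex list" where "xs = (if a < 0 then [-1] else []) @ map of_nat la @ map (\<lambda>p. inverse (of_nat p)) lb"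
  have "prod_list xs = (if a < 0 then -1 else 1) * of_nat (nat \<bar>a\<bar>) * inverse (of_nat (nat b))"
    unfolding xs_def by (simp add: prod_list_of_nat prod_list_inv_nat LA(1) LB(1))
  also have "\<dots> = of_rat q"
    using b by (auto simp: qab of_rat_mult of_rat_inverse divide_inverse of_nat_nat)
  finally have prodxs: "prod_list xs = of_rat q" .
  have xsne: "xs \<noteq> []"
  proof
    assume "xs = []"
    hence "of_rat q = (1::complex)" using prodxs by simp
    thus False using assms(2) by simp
  qed
  have mem: "(x = -1 \<and> True) \<or> (\<exists>p\<in>S. x = of_nat p) \<or> (\<exists>p\<in>S. x = inverse (of_nat p))" if "x \<in> set xs" for x
  proof -
    have "x = -1 \<or> x \<in> of_nat ` set la \<or> x \<in> (\<lambda>p. inverse (of_nat p)) ` set lb"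
      using that unfolding xs_def by (auto split: if_splits)
    moreover have "p \<in> S" if "p \<in> set la" for p
    proof -
      have "prime p" "p dvd nat \<bar>a\<bar>" using LA(2)[OF that] by auto
      hence "int p dvd a" by (metis dvd_abs_iff int_dvd_int_iff int_nat_eq abs_ge_zero)
      thus ?thesis using S' \<open>prime p\<close> by auto
    qed
    moreover have "p \<in> S" if "p \<in> set lb" for p
    proof -
      have "prime p" "p dvd nat b" using LB(2)[OF that] by auto
      hence "int p dvd b" using b by (metis int_dvd_int_iff int_nat_eq less_imp_le)
      thus ?thesis using S' \<open>prime p\<close> by auto
    qed
    ultimately show ?thesis by blast
  qed
  have xsprops: "\<forall>x\<in>set xs. algebraic x \<and> x \<noteq> 0 \<and> mahler x \<le> real P"
  proof
    fix x assume "x \<in> set xs"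
    from mem[OF this] show "algebraic x \<and> x \<noteq> 0 \<and> mahler x \<le> real P"
    proof (elim disjE conjE bexE)
      assume "x = -1" thus ?thesis using mahler_m1 P1 by (auto intro: rat_imp_algebraic)
    next
      fix p assume p: "p \<in> S" "x = of_nat p"
      hence "prime p" using S' by auto
      thus ?thesis using p mahler_nat[of p] leP[OF p(1)] by (auto intro: rat_imp_algebraic)
    next
      fix p assume p: "p \<in> S" "x = inverse (of_nat p)"
      hence "prime p" using S' by auto
      moreover have "x \<in> \<rat>" using p by simp
      ultimately show ?thesis using p mahler_inv_nat[of p] leP[OF p(1)] by (auto intro: rat_imp_algebraic)
    qed
  qed
  define m0 where "m0 = Max (mahler ` set xs)"
  have m0T: "m0 \<in> T" unfolding T_def m0_def using xsne xsprops prodxs by blast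
  have "m0 \<le> real P" unfolding m0_def using xsne xsprops by (subst Max_le_iff) auto
  hence m0P: "m0 = real P" using lower[OF m0T] by simp
  have "Inf T = real P" using m0T lower m0P by (intro cInf_eq_minimum) auto
  thus ?thesis unfolding mahler_ultra_def T_def[symmetric] P_def S_def by simp
qed

end
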